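(* Let $n\ge 4$, and let $\mathcal L_1,\mathcal L_2$ be the complex Leibniz algebras with basis $\{h_1,h_2,e_1,\dots,e_n\}$ where $\mathcal L_1$ has nonzero products $[e_1,e_1]=e_3$, $[e_i,e_1]=e_{i+1}$ ($3\le i\le n-1$), $[e_1,h_2]=e_1$, $[h_2,e_1]=-e_1$, $[e_2,h_1]=e_2$, $[h_1,e_2]=-e_2$, $[e_i,h_2]=(i-1)e_i$ ($3\le i\le n$), and $\mathcal L_2$ has the same products except $[h_1,e_2]=0$. Put $e_{n+1}=0$. (1) $(d,D)$ is a biderivation of $\mathcal L_1$ iff there are $\alpha_1,\dots,\alpha_4,\beta_4,\dots,\beta_{n+1}\in\mathbb C$ with $d(h_1)=-\alpha_2e_2$, $d(h_2)=-\alpha_1e_1$, $d(e_1)=\alpha_4e_1+\alpha_1e_3$, $d(e_2)=\alpha_3e_2$, $d(e_i)=(i-1)\alpha_4e_i+\alpha_1e_{i+1}$ ($3\le i\le n$), and $D(h_1)=-\alpha_2e_2$, $D(h_2)=-\alpha_1e_1+\sum_{i=3}^{n-1}(i-1)\beta_{i+1}e_i+\beta_{n+1}e_n$, $D(e_1)=\alpha_4e_1-\alpha_1e_3+\sum_{i=4}^n\beta_ie_i$, $D(e_2)=\alpha_3e_2$, $D(e_i)=0$ ($3\le i\le n$). (2) $(d,D)$ is a biderivation of $\mathcal L_2$ iff there are $\alpha_1,\alpha_2,\alpha_3,\beta_4,\dots,\beta_{n+2}\in\mathbb C$ with $d(h_1)=0$, $d(h_2)=-\alpha_1e_1$, $d(e_1)=\alpha_3e_1+\alpha_1e_3$,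 $d(e_2)=\alpha_2e_2$, $d(e_i)=(i-1)\alpha_3e_i+\alpha_1e_{i+1}$ ($3\le i\le n$), and $D(h_1)=\beta_{n+2}e_2$, $D(h_2)=-\alpha_1e_1+\sum_{i=3}^{n-1}(i-1)\beta_{i+1}e_i+\beta_{n+1}e_n$, $D(e_1)=\alpha_3e_1-\alpha_1e_3+\sum_{i=4}^n\beta_ie_i$, $D(e_i)=0$ ($2\le i\le n$).
   Context: Leibniz algebras are right Leibniz over $\mathbb C$: $[x,[y,z]]=[[x,y],z]-[[x,z],y]$. Unlisted products are zero. A derivation is a linear $d$ with $d([x,y])=[d(x),y]+[x,d(y)]$; an anti-derivation is a linear $D$ with $D([x,y])=[D(x),y]-[D(y),x]$; a biderivation is a pair $(d,D)$ of a derivation and an anti-derivation with $[x,d(y)]=[x,D(y)]$ for all $x,y$. *)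

theory Defs
  imports Complex_Main "HOL-Library.Function_Algebras"
begin

text \<open>Elements of the algebra are coordinate functions bas => complex supported on the
  basis of size n+2 (pointwise addition from Function_Algebras).\<close>

datatype bas = H1 | H2 | E nat

definition Bas :: "nat \<Rightarrow> bas set" where
  "Bas n = {H1, H2} \<union> E ` {1..n}"

definition Lsp :: "nat \<Rightarrow> (bas \<Rightarrow> complex) set" where
  "Lsp n = {x. \<forall>b. b \<notin> Bas n \<longrightarrow> x b = 0}"

definition scl :: "complex \<Rightarrow> (bas \<Rightarrow> complex) \<Rightarrow> (bas \<Rightarrow> complex)" where
  "scl c v = (\<lambda>k. c * v k)"

definition ind :: "bas \<Rightarrow> (bas \<Rightarrow> complex)" where
  "ind b = (\<lambda>k. if k = b then 1 else 0)"

definition h1 :: "bas \<Rightarrow> complex" where "h1 = ind H1"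
definition h2 :: "bas \<Rightarrow> complex" where "h2 = ind H2"

text \<open>e_i in the n-dimensional algebra; e_i = 0 outside 1..n (in particular e_{n+1} = 0).\<close>
definition ee :: "nat \<Rightarrow> nat \<Rightarrow> (bas \<Rightarrow> complex)" where
  "ee n i = (if 1 \<le> i \<and> i \<le> n then ind (E i) else 0)"

text \<open>Bracket from structure constants c (c a b = [a,b] on basis elements), extended bilinearly.\<close>
definition br :: "(bas \<Rightarrow> bas \<Rightarrow> (bas \<Rightarrow> complex)) \<Rightarrow> nat \<Rightarrow>
    (bas \<Rightarrow> complex) \<Rightarrow> (bas \<Rightarrow> complex) \<Rightarrow> (bas \<Rightarrow> complex)" where
  "br c n x y = (\<lambda>k. \<Sum>a\<in>Bas n. \<Sum>b\<in>Bas n. x a * y b * c a b k)"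

definition c1 :: "nat \<Rightarrow> bas \<Rightarrow> bas \<Rightarrow> (bas \<Rightarrow> complex)" where
  "c1 n a b = (case (a, b) of
      (E i, E j) \<Rightarrow> (if j = 1 \<and> i = 1 then ee n 3
                    else if j = 1 \<and> 3 \<le> i \<and> i \<le> n - 1 then ee n (i + 1) else 0)
    | (E i, H2) \<Rightarrow> (if i = 1 then ee n 1
                    else if 3 \<le> i \<and> i \<le> n then scl (of_nat (i - 1)) (ee n i) else 0)
    | (H2, E i) \<Rightarrow> (if i = 1 then scl (-1) (ee n 1) else 0)
    | (E i, H1) \<Rightarrow> (if i = 2 then ee n 2 else 0)
    | (H1, E i) \<Rightarrow> (if i = 2 then scl (-1) (ee n 2) else 0)
    | _ \<Rightarrow> 0)"

definition c2 :: "nat \<Rightarrow> bas \<Rightarrow> bas \<Rightarrow> (bas \<Rightarrow> complex)" where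
  "c2 n a b = (if a = H1 \<and> b = E 2 then 0 else c1 n a b)"

definition lin :: "nat \<Rightarrow> ((bas \<Rightarrow> complex) \<Rightarrow> (bas \<Rightarrow> complex)) \<Rightarrow> bool" where
  "lin n f \<longleftrightarrow> (\<forall>x\<in>Lsp n. f x \<in> Lsp n)
     \<and> (\<forall>x\<in>Lsp n. \<forall>y\<in>Lsp n. f (x + y) = f x + f y)
     \<and> (\<forall>c. \<forall>x\<in>Lsp n. f (scl c x) = scl c (f x))"

definition is_der :: "(bas \<Rightarrow> bas \<Rightarrow> (bas \<Rightarrow> complex)) \<Rightarrow> nat \<Rightarrow>
    ((bas \<Rightarrow> complex) \<Rightarrow> (bas \<Rightarrow> complex)) \<Rightarrow> bool" where
  "is_der c n d \<longleftrightarrow> lin n d \<and>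
     (\<forall>x\<in>Lsp n. \<forall>y\<in>Lsp n. d (br c n x y) = br c n (d x) y + br c n x (d y))"

definition is_antider :: "(bas \<Rightarrow> bas \<Rightarrow> (bas \<Rightarrow> complex)) \<Rightarrow> nat \<Rightarrow>
    ((bas \<Rightarrow> complex) \<Rightarrow> (bas \<Rightarrow> complex)) \<Rightarrow> bool" where
  "is_antider c n D \<longleftrightarrow> lin n D \<and>
     (\<forall>x\<in>Lsp n. \<forall>y\<in>Lsp n. D (br c n x y) = br c n (D x) y - br c n (D y) x)"

definition is_bider :: "(bas \<Rightarrow> bas \<Rightarrow> (bas \<Rightarrow> complex)) \<Rightarrow> nat \<Rightarrow>
    ((bas \<Rightarrow> complex) \<Rightarrow> (bas \<Rightarrow> complex)) \<Rightarrow> ((bas \<Rightarrow> complex) \<Rightarrow> (bas \<Rightarrow> complex)) \<Rightarrow> bool" where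
  "is_bider c n d D \<longleftrightarrow> is_der c n d \<and> is_antider c n D \<and>
     (\<forall>x\<in>Lsp n. \<forall>y\<in>Lsp n. br c n x (d y) = br c n x (D y))"

end

theory Submission imports Defs begin

lemma sum_app: "(sum f A) k = (\<Sum>a\<in>A. f a k)"
  by (induction A rule: infinite_finite_induct) auto

lemma sum_Bas: "(\<Sum>a\<in>Bas n. f a) = f H1 + f H2 + (\<Sum>j=1..n. f (E j))"
proof -
  have "Bas n = insert H1 (insert H2 (E ` {1..n}))" by (auto simp: Bas_def)
  moreover have "inj_on E {1..n}" by (auto simp: inj_on_def)
  ultimately show ?thesis by (simp add: sum.reindex add.assoc image_iff)
qed

definition brc :: "bool \<Rightarrow> nat \<Rightarrow> (bas\<Rightarrow>complex) \<Rightarrow> (bas\<Rightarrow>complex) \<Rightarrow> bas \<Rightarrow> complex" where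
"brc t n x y k = (case k of E m \<Rightarrow>
   if m = 1 then x (E 1) * y H2 - x H2 * y (E 1)
   else if m = 2 then x (E 2) * y H1 - (if t then x H1 * y (E 2) else 0)
   else if m = 3 then x (E 1) * y (E 1) + 2 * x (E 3) * y H2
   else if 4 \<le> m \<and> m \<le> n then x (E (m-1)) * y (E 1) + of_nat (m-1) * x (E m) * y H2
   else 0
 | _ \<Rightarrow> 0)"

lemma c1_pt: "n \<ge> 4 \<Longrightarrow> c1 n a b k = (case k of E m \<Rightarrow>
   (if m = 1 then (if a = E 1 \<and> b = H2 then 1 else 0) + (if a = H2 \<and> b = E 1 then -1 else 0)
   else if m = 2 then (if a = E 2 \<and> b = H1 then 1 else 0) + (if a = H1 \<and> b = E 2 then -1 else 0)
   else if m = 3 then (if a = E 1 \<and> b = E 1 then 1 else 0) + (if a = E 3 \<and> b = H2 then 2 else 0)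
   else if 4 \<le> m \<and> m \<le> n then (if a = E (m-1) \<and> b = E 1 then 1 else 0) + (if a = E m \<and> b = H2 then of_nat (m-1) else 0)
   else 0) | _ \<Rightarrow> 0)"
  by (cases a; cases b; cases k) (auto simp: c1_def ee_def ind_def scl_def)

lemma if_and0: "(if P \<and> Q then a else 0) = (if P then (if Q then a else 0) else 0)" by simp

lemma sum_ifc: "(\<Sum>j\<in>A. if P then f j else 0) = (if P then sum f A else 0)" by simp

lemma br1: assumes "n \<ge> 4" shows "br (c1 n) n x y = brc True n x y"
proof
  fix k
  show "br (c1 n) n x y k = brc True n x y k"
  proof (cases k)
    case (E m)
    have "m = 1 \<or> m = 2 \<or> m = 3 \<or> (4 \<le> m \<and> m \<le> n) \<or> m = 0 \<or> m > n" by auto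
    then show ?thesis using assms unfolding br_def brc_def E c1_pt[OF assms] sum_Bas
      by (elim disjE) (auto simp add: if_distrib[of "\<lambda>z. _ * z"] sum.distrib if_and0 sum_ifc cong: if_cong)
  qed (auto simp: br_def brc_def c1_pt[OF assms])
qed

lemma c2_pt: "n \<ge> 4 \<Longrightarrow> c2 n a b k = (case k of E m \<Rightarrow>
   (if m = 1 then (if a = E 1 \<and> b = H2 then 1 else 0) + (if a = H2 \<and> b = E 1 then -1 else 0)
   else if m = 2 then (if a = E 2 \<and> b = H1 then 1 else 0)
   else if m = 3 then (if a = E 1 \<and> b = E 1 then 1 else 0) + (if a = E 3 \<and> b = H2 then 2 else 0)
   else if 4 \<le> m \<and> m \<le> n then (if a = E (m-1) \<and> b = E 1 then 1 else 0) + (if a = E m \<and> b = H2 then of_nat (m-1) else 0)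
   else 0) | _ \<Rightarrow> 0)"
  unfolding c2_def by (cases a; cases b; cases k) (auto simp: c1_def ee_def ind_def scl_def)

lemma br2: assumes "n \<ge> 4" shows "br (c2 n) n x y = brc False n x y"
proof
  fix k
  show "br (c2 n) n x y k = brc False n x y k"
  proof (cases k)
    case (E m)
    have "m = 1 \<or> m = 2 \<or> m = 3 \<or> (4 \<le> m \<and> m \<le> n) \<or> m = 0 \<or> m > n" by auto
    then show ?thesis using assms unfolding br_def brc_def E c2_pt[OF assms] sum_Bas
      by (elim disjE) (auto simp add: if_distrib[of "\<lambda>z. _ * z"] sum.distrib if_and0 sum_ifc cong: if_cong)
  qed (auto simp: br_def brc_def c2_pt[OF assms])
qed

definition ct :: "bool \<Rightarrow> nat \<Rightarrow> bas \<Rightarrow> bas \<Rightarrow> (bas \<Rightarrow> complex)" where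
  "ct t n = (if t then c1 n else c2 n)"

lemma brt: "n \<ge> 4 \<Longrightarrow> br (ct t n) n x y = brc t n x y"
  by (cases t) (simp_all add: ct_def br1 br2)

lemma Lsp_out: "x \<in> Lsp n \<Longrightarrow> m = 0 \<or> n < m \<Longrightarrow> x (E m) = 0"
  unfolding Lsp_def by (erule CollectE, erule allE[of _ "E m"]) (auto simp: Bas_def)

lemma vec_eq:
  assumes "x \<in> Lsp n" "y \<in> Lsp n" "x H1 = y H1" "x H2 = y H2"
    "\<And>m. 1 \<le> m \<Longrightarrow> m \<le> n \<Longrightarrow> x (E m) = y (E m)"
  shows "x = y"
proof
  fix k show "x k = y k"
  proof (cases k)
    case (E m)
    then show ?thesis using assms Lsp_out[OF assms(1), of m] Lsp_out[OF assms(2), of m]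
      by (cases "1 \<le> m \<and> m \<le> n") auto
  qed (use assms in auto)
qed

lemma Lsp_add: "x \<in> Lsp n \<Longrightarrow> y \<in> Lsp n \<Longrightarrow> x + y \<in> Lsp n" by (auto simp: Lsp_def)
lemma Lsp_scl: "x \<in> Lsp n \<Longrightarrow> scl c x \<in> Lsp n" by (auto simp: Lsp_def scl_def)
lemma Lsp_0: "0 \<in> Lsp n" by (auto simp: Lsp_def)
lemma Lsp_sum: "(\<And>a. a \<in> A \<Longrightarrow> f a \<in> Lsp n) \<Longrightarrow> sum f A \<in> Lsp n"
  by (induction A rule: infinite_finite_induct) (auto simp: Lsp_0 Lsp_add)
lemma Lsp_ind: "a \<in> Bas n \<Longrightarrow> ind a \<in> Lsp n" by (auto simp: Lsp_def ind_def)
lemma Lsp_ee: "ee n i \<in> Lsp n" by (auto simp: Lsp_def ee_def ind_def Bas_def)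
lemma Lsp_h1: "h1 \<in> Lsp n" by (auto simp: Lsp_def h1_def ind_def Bas_def)
lemma Lsp_h2: "h2 \<in> Lsp n" by (auto simp: Lsp_def h2_def ind_def Bas_def)
lemma Lsp_brc: "n \<ge> 4 \<Longrightarrow> brc t n x y \<in> Lsp n" by (auto simp: Lsp_def brc_def Bas_def split: bas.split)

lemma lin_0: "lin n f \<Longrightarrow> f 0 = 0"
proof -
  assume l: "lin n f"
  have "f (scl 0 0) = scl 0 (f 0)" using l Lsp_0 by (auto simp: lin_def)
  moreover have "scl 0 (0::bas\<Rightarrow>complex) = 0" "scl 0 (f 0) = 0" by (auto simp: scl_def)
  ultimately show ?thesis by simp
qed

lemma lin_sum: "lin n f \<Longrightarrow> (\<And>a. a \<in> A \<Longrightarrow> v a \<in> Lsp n) \<Longrightarrow> f (sum v A) = (\<Sum>a\<in>A. f (v a))"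
proof (induction A rule: infinite_finite_induct)
  case (insert a A)
  have "f (sum v (insert a A)) = f (v a + sum v A)" using insert by simp
  also have "\<dots> = f (v a) + f (sum v A)" using insert Lsp_sum[of A v n] by (auto simp: lin_def)
  also have "\<dots> = f (v a) + (\<Sum>a\<in>A. f (v a))" using insert by simp
  also have "\<dots> = (\<Sum>a\<in>insert a A. f (v a))" by (rule sum.insert[OF insert(1,2), symmetric])
  finally show ?case .
qed (auto simp: lin_0)

lemma expand: "x \<in> Lsp n \<Longrightarrow> x = (\<Sum>a\<in>Bas n. scl (x a) (ind a))"
proof
  fix k assume x: "x \<in> Lsp n"
  have fin: "finite (Bas n)" by (simp add: Bas_def)
  have "(\<Sum>a\<in>Bas n. scl (x a) (ind a)) k = (\<Sum>a\<in>Bas n. if a = k then x k else 0)"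
    unfolding sum_app by (rule sum.cong) (auto simp: scl_def ind_def)
  also have "\<dots> = x k" using x fin by (auto simp: Lsp_def)
  finally show "x k = (\<Sum>a\<in>Bas n. scl (x a) (ind a)) k" by simp
qed

lemma lin_ext:
  assumes "lin n f" "lin n g" "\<And>a. a \<in> Bas n \<Longrightarrow> f (ind a) = g (ind a)" "x \<in> Lsp n"
  shows "f x = g x"
proof -
  have "f x = f (\<Sum>a\<in>Bas n. scl (x a) (ind a))" using expand[OF assms(4)] by simp
  also have "\<dots> = (\<Sum>a\<in>Bas n. f (scl (x a) (ind a)))" by (rule lin_sum[OF assms(1)]) (auto intro: Lsp_scl Lsp_ind)
  also have "\<dots> = (\<Sum>a\<in>Bas n. g (scl (x a) (ind a)))"
    using assms(1,2,3) Lsp_ind by (intro sum.cong) (auto simp: lin_def)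
  also have "\<dots> = g (\<Sum>a\<in>Bas n. scl (x a) (ind a))" by (rule lin_sum[OF assms(2), symmetric]) (auto intro: Lsp_scl Lsp_ind)
  finally show ?thesis using expand[OF assms(4)] by simp
qed


lemmas ev0 = brc_def ee_def ind_def h1_def h2_def scl_def
lemma h1_ap: "h1 k = (if k = H1 then 1 else 0)" by (simp add: h1_def ind_def)
lemma h2_ap: "h2 k = (if k = H2 then 1 else 0)" by (simp add: h2_def ind_def)
lemma ee_ap: "ee n i k = (if k = E i \<and> 1 \<le> i \<and> i \<le> n then 1 else 0)" by (auto simp add: ee_def ind_def)
lemmas ev = brc_def h1_ap h2_ap ee_ap scl_def

lemma bb_h1h2: "brc t n h1 h2 = 0" by (rule ext) (auto simp add: ev0 split: bas.split)
lemma bb_h1e1: "brc t n h1 (ee n 1) = 0" by (rule ext) (auto simp add: ev0 split: bas.split)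
lemma bb_e2h1: "n \<ge> 4 \<Longrightarrow> brc t n (ee n 2) h1 = ee n 2" by (rule ext) (auto simp add: ev0 split: bas.split)
lemma bb_h1h1: "brc t n h1 h1 = 0" by (rule ext) (auto simp add: ev0 split: bas.split)
lemma bb_h2h1: "brc t n h2 h1 = 0" by (rule ext) (auto simp add: ev0 split: bas.split)
lemma bb_h2h2: "brc t n h2 h2 = 0" by (rule ext) (auto simp add: ev0 split: bas.split)
lemma bb_e2h2: "brc t n (ee n 2) h2 = 0" by (rule ext) (auto simp add: ev0 split: bas.split)
lemma bb_h2e1: "n \<ge> 4 \<Longrightarrow> brc t n h2 (ee n 1) = scl (-1) (ee n 1)" by (rule ext) (auto simp add: ev0 split: bas.split)
lemma bb_e1e1: "n \<ge> 4 \<Longrightarrow> brc t n (ee n 1) (ee n 1) = ee n 3" by (rule ext) (auto simp add: ev0 split: bas.split)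
lemma bb_eie1: "n \<ge> 4 \<Longrightarrow> 3 \<le> i \<Longrightarrow> i \<le> n \<Longrightarrow> brc t n (ee n i) (ee n 1) = ee n (i+1)"
  by (rule ext) (auto simp add: ev0 split: bas.split)
lemma bb_h2ei: "3 \<le> i \<Longrightarrow> brc t n h2 (ee n i) = 0" by (rule ext) (auto simp add: ev0 split: bas.split)
lemma bb_h1ei: "3 \<le> i \<Longrightarrow> brc t n h1 (ee n i) = 0" by (rule ext) (auto simp add: ev0 split: bas.split)
lemma bb_h2e2: "brc t n h2 (ee n 2) = 0" by (rule ext) (auto simp add: ev0 split: bas.split)
lemma bb_h1e2: "n \<ge> 4 \<Longrightarrow> brc t n h1 (ee n 2) = (if t then scl (-1) (ee n 2) else 0)" by (rule ext) (auto simp add: ev0 split: bas.split)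


lemma m_cases: "1 \<le> (m::nat) \<Longrightarrow> m = 1 \<or> m = 2 \<or> m \<ge> 3" by auto

lemma base_calc: "n \<ge> 4 \<Longrightarrow> brc t n (scl a4 (ee n 1) + scl a1 (ee n 3)) (ee n 1) + brc t n (ee n 1) (scl a4 (ee n 1) + scl a1 (ee n 3))
   = scl (of_nat (3 - 1) * a4) (ee n 3) + scl a1 (ee n (3 + 1))"
  by (rule ext) (auto simp: ev split: bas.split)

lemma step_calc: "n \<ge> 4 \<Longrightarrow> 3 \<le> i \<Longrightarrow> i + 1 \<le> n \<Longrightarrow>
  brc t n (scl (of_nat (i-1) * a4) (ee n i) + scl a1 (ee n (i+1))) (ee n 1) + brc t n (ee n i) (scl a4 (ee n 1) + scl a1 (ee n 3))
  = scl (of_nat (i + 1 - 1) * a4) (ee n (i+1)) + scl a1 (ee n (i + 1 + 1))"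
proof (rule ext)
  fix k assume a: "n \<ge> 4" "3 \<le> i" "i + 1 \<le> n"
  show "(brc t n (scl (of_nat (i-1) * a4) (ee n i) + scl a1 (ee n (i+1))) (ee n 1) + brc t n (ee n i) (scl a4 (ee n 1) + scl a1 (ee n 3))) k
     = (scl (of_nat (i + 1 - 1) * a4) (ee n (i+1)) + scl a1 (ee n (i + 1 + 1))) k"
  proof (cases k)
    case (E m)
    have "m \<le> 3 \<or> m = i + 1 \<or> m = i + 2 \<or> (m \<ge> 4 \<and> m \<noteq> i + 1 \<and> m \<noteq> i + 2)" by auto
    then show ?thesis using a unfolding E
      by (elim disjE) (auto simp: ev of_nat_diff algebra_simps)
  qed (auto simp: ev)
qed

lemma fwd_d:
  assumes n4: "n \<ge> 4" and ld: "lin n d"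
    and derA: "\<forall>x\<in>Lsp n. \<forall>y\<in>Lsp n. d (brc t n x y) = brc t n (d x) y + brc t n x (d y)"
  shows "d h1 = scl (d h1 (E 2)) (ee n 2)" "\<not> t \<Longrightarrow> d h1 (E 2) = 0"
    "d h2 = scl (d h2 (E 1)) (ee n 1)"
    "d (ee n 1) = scl (d (ee n 1) (E 1)) (ee n 1) + scl (- d h2 (E 1)) (ee n 3)"
    "d (ee n 2) = scl (d (ee n 2) (E 2)) (ee n 2)"
    "\<forall>i. 3 \<le> i \<and> i \<le> n \<longrightarrow> d (ee n i) = scl (of_nat (i-1) * d (ee n 1) (E 1)) (ee n i) + scl (- d h2 (E 1)) (ee n (i+1))"
proof -
  have der: "\<And>x y. x \<in> Lsp n \<Longrightarrow> y \<in> Lsp n \<Longrightarrow> d (brc t n x y) = brc t n (d x) y + brc t n x (d y)"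
    using derA by blast
  have d0: "d 0 = 0" using lin_0[OF ld] .
  have dL: "\<And>x. x \<in> Lsp n \<Longrightarrow> d x \<in> Lsp n" using ld by (auto simp: lin_def)
  have ds: "\<And>c x. x \<in> Lsp n \<Longrightarrow> d (scl c x) = scl c (d x)" using ld by (auto simp: lin_def)
  have q1: "\<And>k. brc t n (d h1) h2 k + brc t n h1 (d h2) k = 0"
    using der[OF Lsp_h1 Lsp_h2] unfolding bb_h1h2 d0 by (simp add: fun_eq_iff)
  have q2: "\<And>k. brc t n (d h1) (ee n 1) k + brc t n h1 (d (ee n 1)) k = 0"
    using der[OF Lsp_h1 Lsp_ee[of n 1]] unfolding bb_h1e1 d0 by (simp add: fun_eq_iff)
  have q3: "\<And>k. d (ee n 2) k = brc t n (d (ee n 2)) h1 k + brc t n (ee n 2) (d h1) k"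
    using der[OF Lsp_ee[of n 2] Lsp_h1] unfolding bb_e2h1[OF n4] by (simp add: fun_eq_iff)
  have q4: "\<And>k. brc t n (d h1) h1 k + brc t n h1 (d h1) k = 0"
    using der[OF Lsp_h1 Lsp_h1] unfolding bb_h1h1 d0 by (simp add: fun_eq_iff)
  have q5: "\<And>k. brc t n (d h2) h1 k + brc t n h2 (d h1) k = 0"
    using der[OF Lsp_h2 Lsp_h1] unfolding bb_h2h1 d0 by (simp add: fun_eq_iff)
  have q6: "\<And>k. brc t n (d h2) h2 k + brc t n h2 (d h2) k = 0"
    using der[OF Lsp_h2 Lsp_h2] unfolding bb_h2h2 d0 by (simp add: fun_eq_iff)
  have q7: "\<And>k. brc t n (d (ee n 2)) h2 k + brc t n (ee n 2) (d h2) k = 0"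
    using der[OF Lsp_ee[of n 2] Lsp_h2] unfolding bb_e2h2 d0 by (simp add: fun_eq_iff)
  have q8: "\<And>k. - d (ee n 1) k = brc t n (d h2) (ee n 1) k + brc t n h2 (d (ee n 1)) k"
    using der[OF Lsp_h2 Lsp_ee[of n 1]] unfolding bb_h2e1[OF n4] ds[OF Lsp_ee[of n 1]] by (simp add: scl_def fun_eq_iff)
  have A1: "d h1 (E 1) = 0" using q1[of "E 1"] n4 by (simp add: ev cong: if_cong)
  have A3: "d h1 (E m) = 0" if "3 \<le> m" "m \<le> n" for m using q1[of "E m"] that n4 by (simp add: ev cong: if_cong split: if_split_asm)
  have AH2: "d h1 H2 = 0" using q2[of "E 1"] n4 by (simp add: ev cong: if_cong)
  have AH1: "d h1 H1 = 0" using q3[of "E 2"] n4 by (simp add: ev cong: if_cong)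
  have QH1: "d (ee n 2) H1 = 0" using q3[of "H1"] n4 by (simp add: ev cong: if_cong)
  have QH2: "d (ee n 2) H2 = 0" using q3[of "H2"] n4 by (simp add: ev cong: if_cong)
  have Q1: "d (ee n 2) (E 1) = 0" using q3[of "E 1"] n4 by (simp add: ev cong: if_cong)
  have Q3: "d (ee n 2) (E m) = 0" if "3 \<le> m" "m \<le> n" for m using q3[of "E m"] that n4 by (simp add: ev cong: if_cong split: if_split_asm)
  have A2: "\<not> t \<Longrightarrow> d h1 (E 2) = 0" using q4[of "E 2"] n4 by (simp add: ev cong: if_cong)
  have B2: "d h2 (E 2) = 0" using q5[of "E 2"] n4 by (simp add: ev cong: if_cong)
  have B3: "d h2 (E m) = 0" if "3 \<le> m" "m \<le> n" for m using q6[of "E m"] that n4 by (simp add: ev cong: if_cong split: if_split_asm)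
  have BH1: "d h2 H1 = 0" using q7[of "E 2"] n4 by (simp add: ev cong: if_cong)
  have PH1: "d (ee n 1) H1 = 0" using q8[of "H1"] n4 by (simp add: ev cong: if_cong)
  have PH2: "d (ee n 1) H2 = 0" using q8[of "H2"] n4 by (simp add: ev cong: if_cong)
  have BH2: "d h2 H2 = 0" using q8[of "E 1"] n4 by (simp add: ev cong: if_cong)
  have P2: "d (ee n 1) (E 2) = 0" using q8[of "E 2"] n4 by (simp add: ev cong: if_cong)
  have P3: "d (ee n 1) (E 3) = - d h2 (E 1)" using q8[of "E 3"] n4 by (simp add: ev cong: if_cong) (metis minus_equation_iff)
  have P4: "d (ee n 1) (E m) = 0" if "4 \<le> m" "m \<le> n" for m using q8[of "E m"] that n4 B3[of "m-1"] by (simp add: ev cong: if_cong split: if_split_asm)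
  show "\<not> t \<Longrightarrow> d h1 (E 2) = 0" by (rule A2)
  show "d h1 = scl (d h1 (E 2)) (ee n 2)"
  proof (rule vec_eq[OF dL[OF Lsp_h1] Lsp_scl[OF Lsp_ee]])
    fix m assume m: "1 \<le> m" "m \<le> n"
    then consider "m = 1" | "m = 2" | "3 \<le> m" by linarith
    then show "d h1 (E m) = scl (d h1 (E 2)) (ee n 2) (E m)"
      using A1 A3[of m] using m by cases (auto simp: ev)
  qed (use AH1 AH2 in \<open>auto simp: ev\<close>)
  show "d h2 = scl (d h2 (E 1)) (ee n 1)"
  proof (rule vec_eq[OF dL[OF Lsp_h2] Lsp_scl[OF Lsp_ee]])
    fix m assume m: "1 \<le> m" "m \<le> n"
    then consider "m = 1" | "m = 2" | "3 \<le> m" by linarith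
    then show "d h2 (E m) = scl (d h2 (E 1)) (ee n 1) (E m)"
      using B2 B3[of m] using m by cases (auto simp: ev)
  qed (use BH1 BH2 in \<open>auto simp: ev\<close>)
  show "d (ee n 2) = scl (d (ee n 2) (E 2)) (ee n 2)"
  proof (rule vec_eq[OF dL[OF Lsp_ee] Lsp_scl[OF Lsp_ee]])
    fix m assume m: "1 \<le> m" "m \<le> n"
    then consider "m = 1" | "m = 2" | "3 \<le> m" by linarith
    then show "d (ee n 2) (E m) = scl (d (ee n 2) (E 2)) (ee n 2) (E m)"
      using Q1 Q3[of m] using m by cases (auto simp: ev)
  qed (use QH1 QH2 in \<open>auto simp: ev\<close>)
  show Pf: "d (ee n 1) = scl (d (ee n 1) (E 1)) (ee n 1) + scl (- d h2 (E 1)) (ee n 3)"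
  proof (rule vec_eq[OF dL[OF Lsp_ee] Lsp_add[OF Lsp_scl[OF Lsp_ee] Lsp_scl[OF Lsp_ee]]])
    fix m assume m: "1 \<le> m" "m \<le> n"
    then have "m = 1 \<or> m = 2 \<or> m = 3 \<or> m \<ge> 4" by auto
    then show "d (ee n 1) (E m) = (scl (d (ee n 1) (E 1)) (ee n 1) + scl (- d h2 (E 1)) (ee n 3)) (E m)"
      using P2 P3 P4[of m] m n4 by (auto simp: ev)
  qed (use PH1 PH2 in \<open>auto simp: ev\<close>)
  define a4 where "a4 = d (ee n 1) (E 1)"
  define a1 where "a1 = - d h2 (E 1)"
  have Pf': "d (ee n 1) = scl a4 (ee n 1) + scl a1 (ee n 3)" using Pf unfolding a4_def a1_def .
  have ind: "j + 3 \<le> n \<longrightarrow> d (ee n (j+3)) = scl (of_nat (j+3-1) * a4) (ee n (j+3)) + scl a1 (ee n (j+3+1))" for j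
  proof (induction j)
    case 0
    have "d (ee n 3) = d (brc t n (ee n 1) (ee n 1))" unfolding bb_e1e1[OF n4] ..
    also have "\<dots> = brc t n (d (ee n 1)) (ee n 1) + brc t n (ee n 1) (d (ee n 1))"
      by (rule der[OF Lsp_ee Lsp_ee])
    also have "\<dots> = scl (of_nat (3 - 1) * a4) (ee n 3) + scl a1 (ee n (3 + 1))"
      unfolding Pf' by (rule base_calc[OF n4])
    finally show ?case by simp
  next
    case (Suc j)
    show ?case
    proof
      assume j: "Suc j + 3 \<le> n"
      have IH: "d (ee n (j+3)) = scl (of_nat (j + 3 - 1) * a4) (ee n (j + 3)) + scl a1 (ee n (j + 3 + 1))"
        using Suc j by (simp add: fun_eq_iff)
      have "d (ee n (Suc j + 3)) = d (brc t n (ee n (j+3)) (ee n 1))" using bb_eie1[OF n4, of "j+3"] j by simp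
      also have "\<dots> = brc t n (d (ee n (j+3))) (ee n 1) + brc t n (ee n (j+3)) (d (ee n 1))"
        by (rule der[OF Lsp_ee Lsp_ee])
      also have "\<dots> = scl (of_nat (j + 3 + 1 - 1) * a4) (ee n (j + 3 + 1)) + scl a1 (ee n (j + 3 + 1 + 1))"
        unfolding IH Pf' by (rule step_calc[OF n4]) (use j in auto)
      finally show "d (ee n (Suc j + 3)) = scl (of_nat (Suc j + 3 - 1) * a4) (ee n (Suc j + 3)) + scl a1 (ee n (Suc j + 3 + 1))"
        by simp
    qed
  qed
  show "\<forall>i. 3 \<le> i \<and> i \<le> n \<longrightarrow> d (ee n i) = scl (of_nat (i-1) * d (ee n 1) (E 1)) (ee n i) + scl (- d h2 (E 1)) (ee n (i+1))"
  proof (intro allI impI)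
    fix i assume i: "3 \<le> i \<and> i \<le> n"
    then have "i - 3 + 3 = i" by simp
    then show "d (ee n i) = scl (of_nat (i-1) * d (ee n 1) (E 1)) (ee n i) + scl (- d h2 (E 1)) (ee n (i+1))"
      using ind[of "i-3"] i unfolding a4_def a1_def by simp
  qed
qed


lemma sum_ee_E: "finite S \<Longrightarrow> (\<Sum>i\<in>S. scl (f i) (ee n i)) (E m) = (if m \<in> S \<and> 1 \<le> m \<and> m \<le> n then f m else 0)"
proof -
  assume S: "finite S"
  have "(\<Sum>i\<in>S. scl (f i) (ee n i)) (E m) = (\<Sum>i\<in>S. if i = m then (if 1 \<le> m \<and> m \<le> n then f m else 0) else 0)"
    unfolding sum_app by (rule sum.cong) (auto simp: scl_def ee_ap)
  also have "\<dots> = (if m \<in> S \<and> 1 \<le> m \<and> m \<le> n then f m else 0)" using S by simp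
  finally show ?thesis .
qed

lemma sum_ee_H: "(\<Sum>i\<in>S. scl (f i) (ee n i)) H1 = 0" "(\<Sum>i\<in>S. scl (f i) (ee n i)) H2 = 0"
  unfolding sum_app by (auto simp: scl_def ee_ap)

lemma fwd_D:
  assumes n4: "n \<ge> 4" and ld: "lin n d" and lD: "lin n D"
    and derA: "\<forall>x\<in>Lsp n. \<forall>y\<in>Lsp n. d (brc t n x y) = brc t n (d x) y + brc t n x (d y)"
    and aderA: "\<forall>x\<in>Lsp n. \<forall>y\<in>Lsp n. D (brc t n x y) = brc t n (D x) y - brc t n (D y) x"
    and c3A: "\<forall>x\<in>Lsp n. \<forall>y\<in>Lsp n. brc t n x (d y) = brc t n x (D y)"
  shows "D h1 = scl (D h1 (E 2)) (ee n 2)" "t \<Longrightarrow> D h1 (E 2) = d h1 (E 2)"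
    "D h2 = scl (d h2 (E 1)) (ee n 1) + (\<Sum>i = 3..n - 1. scl (of_nat (i - 1) * D (ee n 1) (E (i + 1))) (ee n i))
                 + scl (D h2 (E n)) (ee n n)"
    "D (ee n 1) = scl (d (ee n 1) (E 1)) (ee n 1) + scl (d h2 (E 1)) (ee n 3) + (\<Sum>i = 4..n. scl (D (ee n 1) (E i)) (ee n i))"
    "D (ee n 2) = scl (if t then d (ee n 2) (E 2) else 0) (ee n 2)"
    "\<forall>i. 3 \<le> i \<and> i \<le> n \<longrightarrow> D (ee n i) = 0"
proof -
  have ader: "\<And>x y. x \<in> Lsp n \<Longrightarrow> y \<in> Lsp n \<Longrightarrow> D (brc t n x y) = brc t n (D x) y - brc t n (D y) x"
    using aderA by blast
  have c3: "\<And>x y. x \<in> Lsp n \<Longrightarrow> y \<in> Lsp n \<Longrightarrow> brc t n x (d y) = brc t n x (D y)"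
    using c3A by blast
  note fd = fwd_d[OF n4 ld derA]
  have D0: "D 0 = 0" using lin_0[OF lD] .
  have DL: "\<And>x. x \<in> Lsp n \<Longrightarrow> D x \<in> Lsp n" using lD by (auto simp: lin_def)
  have Ds: "\<And>c x. x \<in> Lsp n \<Longrightarrow> D (scl c x) = scl c (D x)" using lD by (auto simp: lin_def)
  have C3: "D y H2 = d y H2 \<and> D y (E 1) = d y (E 1) \<and> D y H1 = d y H1 \<and> (t \<longrightarrow> D y (E 2) = d y (E 2))"
    if y: "y \<in> Lsp n" for y
  proof -
    have a: "brc t n (ee n 1) (d y) k = brc t n (ee n 1) (D y) k" for k using c3[OF Lsp_ee y] by simp
    have b: "brc t n (ee n 2) (d y) k = brc t n (ee n 2) (D y) k" for k using c3[OF Lsp_ee y] by simp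
    have c: "brc t n h1 (d y) k = brc t n h1 (D y) k" for k using c3[OF Lsp_h1 y] by simp
    show ?thesis using a[of "E 1"] a[of "E 3"] b[of "E 2"] c[of "E 2"] n4 by (simp add: ev cong: if_cong split: if_split_asm)
  qed
  have r1: "\<And>k. brc t n (D h2) (ee n i) k - brc t n (D (ee n i)) h2 k = 0" if "3 \<le> i" for i
    using ader[OF Lsp_h2 Lsp_ee[of n i]] unfolding bb_h2ei[OF that] D0 by (simp add: fun_eq_iff)
  have r2: "\<And>k. brc t n (D h1) (ee n i) k - brc t n (D (ee n i)) h1 k = 0" if "3 \<le> i" for i
    using ader[OF Lsp_h1 Lsp_ee[of n i]] unfolding bb_h1ei[OF that] D0 by (simp add: fun_eq_iff)
  have r3: "\<And>k. brc t n (D h2) h1 k - brc t n (D h1) h2 k = 0"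
    using ader[OF Lsp_h2 Lsp_h1] unfolding bb_h2h1 D0 by (simp add: fun_eq_iff)
  have r4: "\<And>k. brc t n (D h2) (ee n 2) k - brc t n (D (ee n 2)) h2 k = 0"
    using ader[OF Lsp_h2 Lsp_ee[of n 2]] unfolding bb_h2e2 D0 by (simp add: fun_eq_iff)
  have r5: "\<not> t \<Longrightarrow> brc t n (D h1) (ee n 2) k - brc t n (D (ee n 2)) h1 k = 0" for k
    using ader[OF Lsp_h1 Lsp_ee[of n 2]] unfolding bb_h1e2[OF n4] by (simp add: D0 fun_eq_iff)
  have r6: "\<And>k. brc t n (D h1) h2 k - brc t n (D h2) h1 k = 0"
    using ader[OF Lsp_h1 Lsp_h2] unfolding bb_h1h2 D0 by (simp add: fun_eq_iff)
  have r7: "\<And>k. - D (ee n 1) k = brc t n (D h2) (ee n 1) k - brc t n (D (ee n 1)) h2 k"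
    using ader[OF Lsp_h2 Lsp_ee[of n 1]] unfolding bb_h2e1[OF n4] Ds[OF Lsp_ee[of n 1]] by (simp add: scl_def fun_eq_iff)
  have Ri: "D (ee n i) = 0" if i: "3 \<le> i" "i \<le> n" for i
  proof (rule vec_eq[OF DL[OF Lsp_ee] Lsp_0])
    have di: "d (ee n i) = scl (of_nat (i-1) * d (ee n 1) (E 1)) (ee n i) + scl (- d h2 (E 1)) (ee n (i+1))"
      using fd(6) i by blast
    show "D (ee n i) H1 = 0 H1" using C3[OF Lsp_ee[of n i]] di i by (simp add: ev)
    show "D (ee n i) H2 = 0 H2" using C3[OF Lsp_ee[of n i]] di i by (simp add: ev)
    fix m assume m: "1 \<le> m" "m \<le> n"
    then consider "m = 1" | "m = 2" | "3 \<le> m" by linarith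
    then show "D (ee n i) (E m) = 0 (E m)"
    proof cases
      case 1 then show ?thesis using r1[OF i(1), of "E 1"] n4 i by (simp add: ev cong: if_cong)
    next
      case 2 then show ?thesis using r2[OF i(1), of "E 2"] n4 i by (simp add: ev cong: if_cong)
    next
      case 3 then show ?thesis using r1[OF i(1), of "E m"] n4 i m by (simp add: ev cong: if_cong split: if_split_asm)
    qed
  qed
  then show "\<forall>i. 3 \<le> i \<and> i \<le> n \<longrightarrow> D (ee n i) = 0" by blast
  have A3: "D h1 (E m) = 0" if "3 \<le> m" "m \<le> n" for m using r3[of "E m"] that n4 by (simp add: ev cong: if_cong split: if_split_asm)
  have Q3: "D (ee n 2) (E m) = 0" if "3 \<le> m" "m \<le> n" for m using r4[of "E m"] that n4 by (simp add: ev cong: if_cong split: if_split_asm)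
  have Q1: "D (ee n 2) (E 1) = 0" using r4[of "E 1"] n4 by (simp add: ev cong: if_cong)
  have Q2: "\<not> t \<Longrightarrow> D (ee n 2) (E 2) = 0" using r5[of "E 2"] n4 by (simp add: ev cong: if_cong)
  have B2: "D h2 (E 2) = 0" using r6[of "E 2"] n4 by (simp add: ev cong: if_cong)
  have P2: "D (ee n 1) (E 2) = 0" using r7[of "E 2"] n4 by (simp add: ev cong: if_cong)
  have P3: "D (ee n 1) (E 3) = D h2 (E 1)" using r7[of "E 3"] n4 by (simp add: ev cong: if_cong)
  have P4: "D h2 (E (m - 1)) = of_nat (m - 2) * D (ee n 1) (E m)" if "4 \<le> m" "m \<le> n" for m
    using r7[of "E m"] that n4 by (simp add: ev of_nat_diff algebra_simps cong: if_cong split: if_split_asm)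
  have dh1: "d h1 = scl (d h1 (E 2)) (ee n 2)" by (rule fd(1))
  have dh2: "d h2 = scl (d h2 (E 1)) (ee n 1)" by (rule fd(3))
  have de1: "d (ee n 1) = scl (d (ee n 1) (E 1)) (ee n 1) + scl (- d h2 (E 1)) (ee n 3)" by (rule fd(4))
  have de2: "d (ee n 2) = scl (d (ee n 2) (E 2)) (ee n 2)" by (rule fd(5))
  note C3h1 = C3[OF Lsp_h1] and C3h2 = C3[OF Lsp_h2] and C3e1 = C3[OF Lsp_ee[of n 1]] and C3e2 = C3[OF Lsp_ee[of n 2]]
  show "t \<Longrightarrow> D h1 (E 2) = d h1 (E 2)" using C3h1 by simp
  show "D h1 = scl (D h1 (E 2)) (ee n 2)" (is "_ = ?r")
  proof (rule vec_eq)
    show "D h1 \<in> Lsp n" by (rule DL[OF Lsp_h1])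
    show "?r \<in> Lsp n" by (intro Lsp_add Lsp_scl Lsp_ee Lsp_sum)
    show "D h1 H1 = ?r H1" using C3h1 fun_cong[OF dh1, of H1] by (simp add: ev)
    show "D h1 H2 = ?r H2" using C3h1 fun_cong[OF dh1, of H2] by (simp add: ev)
    fix m assume m: "1 \<le> m" "m \<le> n"
    then consider "m = 1" | "m = 2" | "3 \<le> m" by linarith
    then show "D h1 (E m) = ?r (E m)"
    proof cases
      case 1 then show ?thesis using C3h1 fun_cong[OF dh1, of "E 1"] n4 by (simp add: ev)
    next
      case 2 then show ?thesis using n4 by (simp add: ev)
    next
      case 3 then show ?thesis using A3[of m] m by (simp add: ev)
    qed
  qed
  show "D h2 = scl (d h2 (E 1)) (ee n 1) + (\<Sum>i = 3..n - 1. scl (of_nat (i - 1) * D (ee n 1) (E (i + 1))) (ee n i))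
                 + scl (D h2 (E n)) (ee n n)" (is "_ = ?r")
  proof (rule vec_eq)
    show "D h2 \<in> Lsp n" by (rule DL[OF Lsp_h2])
    show "?r \<in> Lsp n" by (intro Lsp_add Lsp_scl Lsp_ee Lsp_sum)
    show "D h2 H1 = ?r H1" using C3h2 fun_cong[OF dh2, of H1] by (simp add: sum_ee_H) (simp add: ev)
    show "D h2 H2 = ?r H2" using C3h2 fun_cong[OF dh2, of H2] by (simp add: sum_ee_H) (simp add: ev)
    fix m assume m: "1 \<le> m" "m \<le> n"
    then consider "m = 1" | "m = 2" | "3 \<le> m" "m \<le> n - 1" | "m = n" by linarith
    then show "D h2 (E m) = ?r (E m)"
    proof cases
      case 1 then show ?thesis using C3h2 fun_cong[OF dh2, of "E 1"] n4 by (simp add: sum_ee_E) (simp add: ev)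
    next
      case 2 then show ?thesis using n4 B2 by (simp add: sum_ee_E) (simp add: ev)
    next
      case 3 then show ?thesis using P4[of "m+1"] m n4 by (simp add: sum_ee_E) (auto simp add: ev)
    next
      case 4 then show ?thesis using n4 by (simp add: sum_ee_E) (auto simp add: ev)
    qed
  qed
  show "D (ee n 1) = scl (d (ee n 1) (E 1)) (ee n 1) + scl (d h2 (E 1)) (ee n 3) + (\<Sum>i = 4..n. scl (D (ee n 1) (E i)) (ee n i))"
    (is "_ = ?r")
  proof (rule vec_eq)
    show "D (ee n 1) \<in> Lsp n" by (rule DL[OF Lsp_ee])
    show "?r \<in> Lsp n" by (intro Lsp_add Lsp_scl Lsp_ee Lsp_sum)
    show "D (ee n 1) H1 = ?r H1" using C3e1 fun_cong[OF de1, of H1] by (simp add: sum_ee_H) (simp add: ev)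
    show "D (ee n 1) H2 = ?r H2" using C3e1 fun_cong[OF de1, of H2] by (simp add: sum_ee_H) (simp add: ev)
    fix m assume m: "1 \<le> m" "m \<le> n"
    then consider "m = 1" | "m = 2" | "m = 3" | "4 \<le> m" by linarith
    then show "D (ee n 1) (E m) = ?r (E m)"
    proof cases
      case 1 then show ?thesis using C3e1 fun_cong[OF de1, of "E 1"] n4 by (simp add: sum_ee_E) (simp add: ev)
    next
      case 2 then show ?thesis using n4 P2 by (simp add: sum_ee_E) (simp add: ev)
    next
      case 3 then show ?thesis using P3 C3h2 n4 by (simp add: sum_ee_E) (simp add: ev)
    next
      case 4 then show ?thesis using m n4 by (simp add: sum_ee_E) (simp add: ev)
    qed
  qed
  show "D (ee n 2) = scl (if t then d (ee n 2) (E 2) else 0) (ee n 2)" (is "_ = ?r")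
  proof (rule vec_eq)
    show "D (ee n 2) \<in> Lsp n" by (rule DL[OF Lsp_ee])
    show "?r \<in> Lsp n" by (intro Lsp_add Lsp_scl Lsp_ee Lsp_sum)
    show "D (ee n 2) H1 = ?r H1" using C3e2 fun_cong[OF de2, of H1] by (simp add: ev)
    show "D (ee n 2) H2 = ?r H2" using C3e2 fun_cong[OF de2, of H2] by (simp add: ev)
    fix m assume m: "1 \<le> m" "m \<le> n"
    then consider "m = 1" | "m = 2" | "3 \<le> m" by linarith
    then show "D (ee n 2) (E m) = ?r (E m)"
    proof cases
      case 1 then show ?thesis using Q1 n4 by (simp add: ev)
    next
      case 2 then show ?thesis using Q2 C3e2 n4 by (cases t) (simp_all add: ev)
    next
      case 3 then show ?thesis using Q3[of m] m by (simp add: ev)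
    qed
  qed
qed


definition dF :: "nat \<Rightarrow> complex \<Rightarrow> complex \<Rightarrow> complex \<Rightarrow> complex \<Rightarrow> (bas \<Rightarrow> complex) \<Rightarrow> bas \<Rightarrow> complex" where
"dF n a1 a2 a3 a4 x k = (case k of E m \<Rightarrow>
   if m = 1 then a4 * x (E 1) - a1 * x H2
   else if m = 2 then a3 * x (E 2) - a2 * x H1
   else if m = 3 then a1 * x (E 1) + 2 * a4 * x (E 3)
   else if 4 \<le> m \<and> m \<le> n then of_nat (m - 1) * a4 * x (E m) + a1 * x (E (m - 1))
   else 0
 | _ \<Rightarrow> 0)"

definition DF :: "nat \<Rightarrow> complex \<Rightarrow> complex \<Rightarrow> complex \<Rightarrow> complex \<Rightarrow> (nat \<Rightarrow> complex) \<Rightarrow> (bas \<Rightarrow> complex) \<Rightarrow> bas \<Rightarrow> complex" where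
"DF n a1 g a3 a4 b x k = (case k of E m \<Rightarrow>
   if m = 1 then a4 * x (E 1) - a1 * x H2
   else if m = 2 then a3 * x (E 2) + g * x H1
   else if m = 3 then 2 * b 4 * x H2 - a1 * x (E 1)
   else if 4 \<le> m \<and> m \<le> n then (if m = n then b (n + 1) else of_nat (m - 1) * b (m + 1)) * x H2 + b m * x (E 1)
   else 0
 | _ \<Rightarrow> 0)"

lemma lin_dF: "n \<ge> 4 \<Longrightarrow> lin n (dF n a1 a2 a3 a4)"
  unfolding lin_def
  by (auto simp: Lsp_def Bas_def dF_def scl_def fun_eq_iff algebra_simps split: bas.split)

lemma lin_DF: "n \<ge> 4 \<Longrightarrow> lin n (DF n a1 g a3 a4 b)"
  unfolding lin_def
  by (auto simp: Lsp_def Bas_def DF_def scl_def fun_eq_iff algebra_simps split: bas.split)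

lemma dF_basis:
  assumes n4: "n \<ge> 4"
  shows "dF n a1 a2 a3 a4 h1 = scl (- a2) (ee n 2)"
    "dF n a1 a2 a3 a4 h2 = scl (- a1) (ee n 1)"
    "dF n a1 a2 a3 a4 (ee n 1) = scl a4 (ee n 1) + scl a1 (ee n 3)"
    "dF n a1 a2 a3 a4 (ee n 2) = scl a3 (ee n 2)"
    "3 \<le> i \<Longrightarrow> i \<le> n \<Longrightarrow> dF n a1 a2 a3 a4 (ee n i) = scl (of_nat (i - 1) * a4) (ee n i) + scl a1 (ee n (i + 1))"
  using n4 by (auto simp: fun_eq_iff dF_def h1_ap h2_ap ee_ap scl_def split: bas.split)

lemma DF_basis:
  assumes n4: "n \<ge> 4"
  shows "DF n a1 g a3 a4 b h1 = scl g (ee n 2)"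
    "DF n a1 g a3 a4 b h2 = scl (- a1) (ee n 1) + (\<Sum>i = 3..n - 1. scl (of_nat (i - 1) * b (i + 1)) (ee n i))
                 + scl (b (n + 1)) (ee n n)"
    "DF n a1 g a3 a4 b (ee n 1) = scl a4 (ee n 1) + scl (- a1) (ee n 3) + (\<Sum>i = 4..n. scl (b i) (ee n i))"
    "DF n a1 g a3 a4 b (ee n 2) = scl a3 (ee n 2)"
    "3 \<le> i \<Longrightarrow> i \<le> n \<Longrightarrow> DF n a1 g a3 a4 b (ee n i) = 0"
proof -
  show "DF n a1 g a3 a4 b h1 = scl g (ee n 2)" "DF n a1 g a3 a4 b (ee n 2) = scl a3 (ee n 2)"
    "3 \<le> i \<Longrightarrow> i \<le> n \<Longrightarrow> DF n a1 g a3 a4 b (ee n i) = 0"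
    using n4 by (auto simp: fun_eq_iff DF_def h1_ap h2_ap ee_ap scl_def split: bas.split)
  show "DF n a1 g a3 a4 b h2 = scl (- a1) (ee n 1) + (\<Sum>i = 3..n - 1. scl (of_nat (i - 1) * b (i + 1)) (ee n i))
                 + scl (b (n + 1)) (ee n n)"
  proof (rule ext)
    fix k show "DF n a1 g a3 a4 b h2 k = (scl (- a1) (ee n 1) + (\<Sum>i = 3..n - 1. scl (of_nat (i - 1) * b (i + 1)) (ee n i))
                 + scl (b (n + 1)) (ee n n)) k"
    proof (cases k)
      case (E m)
      then show ?thesis using n4 by (simp add: sum_ee_E) (auto simp: DF_def h2_ap ee_ap scl_def)
    qed (simp_all add: sum_ee_H, simp_all add: DF_def h2_ap ee_ap scl_def)
  qed
  show "DF n a1 g a3 a4 b (ee n 1) = scl a4 (ee n 1) + scl (- a1) (ee n 3) + (\<Sum>i = 4..n. scl (b i) (ee n i))"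
  proof (rule ext)
    fix k show "DF n a1 g a3 a4 b (ee n 1) k = (scl a4 (ee n 1) + scl (- a1) (ee n 3) + (\<Sum>i = 4..n. scl (b i) (ee n i))) k"
    proof (cases k)
      case (E m)
      then show ?thesis using n4 by (simp add: sum_ee_E) (auto simp: DF_def h2_ap ee_ap scl_def)
    qed (simp_all add: sum_ee_H, simp_all add: DF_def h2_ap ee_ap scl_def)
  qed
qed


lemma m_split: "(m::nat) = 0 \<or> m = 1 \<or> m = 2 \<or> m = 3 \<or> m = 4 \<or> (\<exists>j. m = j + 5)"
  by presburger

lemma der_dF:
  assumes n4: "n \<ge> 4" and a: "t \<or> a2 = 0"
  shows "dF n a1 a2 a3 a4 (brc t n x y) = brc t n (dF n a1 a2 a3 a4 x) y + brc t n x (dF n a1 a2 a3 a4 y)"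
proof (rule ext)
  fix k show "dF n a1 a2 a3 a4 (brc t n x y) k = (brc t n (dF n a1 a2 a3 a4 x) y + brc t n x (dF n a1 a2 a3 a4 y)) k"
  proof (cases k)
    case (E m)
    from m_split[of m] show ?thesis unfolding E
      by (elim disjE exE) (use n4 a in \<open>auto simp: brc_def dF_def algebra_simps\<close>)
  qed (simp_all add: brc_def dF_def)
qed

lemma ader_DF:
  assumes n4: "n \<ge> 4" and a: "t \<or> a3 = 0"
  shows "DF n a1 g a3 a4 b (brc t n x y) = brc t n (DF n a1 g a3 a4 b x) y - brc t n (DF n a1 g a3 a4 b y) x"
proof (rule ext)
  fix k show "DF n a1 g a3 a4 b (brc t n x y) k = (brc t n (DF n a1 g a3 a4 b x) y - brc t n (DF n a1 g a3 a4 b y) x) k"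
  proof (cases k)
    case (E m)
    from m_split[of m] show ?thesis unfolding E
      by (elim disjE exE) (use n4 a in \<open>auto simp: brc_def DF_def algebra_simps\<close>)
  qed (simp_all add: brc_def DF_def)
qed

lemma c3_F:
  assumes n4: "n \<ge> 4" and a: "t \<longrightarrow> g = - a2 \<and> a3' = a3"
  shows "brc t n x (dF n a1 a2 a3 a4 y) = brc t n x (DF n a1 g a3' a4 b y)"
proof (rule ext)
  fix k show "brc t n x (dF n a1 a2 a3 a4 y) k = brc t n x (DF n a1 g a3' a4 b y) k"
  proof (cases k)
    case (E m)
    from m_split[of m] show ?thesis unfolding E
      by (elim disjE exE) (use n4 a in \<open>auto simp: brc_def dF_def DF_def algebra_simps\<close>)
  qed (simp_all add: brc_def)
qed


lemma scl0: "scl 0 v = 0" "scl c 0 = 0" by (auto simp: scl_def fun_eq_iff)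

lemma basis_cases:
  assumes "a \<in> Bas n" "P h1" "P h2" "\<And>j. 1 \<le> j \<Longrightarrow> j \<le> n \<Longrightarrow> P (ee n j)"
  shows "P (ind a)"
  using assms by (auto simp: Bas_def h1_def h2_def ee_def)

lemma bwd:
  assumes n4: "n \<ge> 4" and hc: "\<And>x y. br c n x y = brc t n x y"
    and ld: "lin n d" and lD: "lin n D" and lF: "lin n F" and lG: "lin n G"
    and bd: "\<And>a. a \<in> Bas n \<Longrightarrow> d (ind a) = F (ind a)"
    and bD: "\<And>a. a \<in> Bas n \<Longrightarrow> D (ind a) = G (ind a)"
    and derF: "\<And>x y. F (brc t n x y) = brc t n (F x) y + brc t n x (F y)"
    and aderG: "\<And>x y. G (brc t n x y) = brc t n (G x) y - brc t n (G y) x"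
    and c3: "\<And>x y. brc t n x (F y) = brc t n x (G y)"
  shows "is_bider c n d D"
proof -
  have ed: "\<And>x. x \<in> Lsp n \<Longrightarrow> d x = F x" by (rule lin_ext[OF ld lF bd])
  have eD: "\<And>x. x \<in> Lsp n \<Longrightarrow> D x = G x" by (rule lin_ext[OF lD lG bD])
  show ?thesis unfolding is_bider_def is_der_def is_antider_def hc
    using ld lD ed eD Lsp_brc[OF n4] derF aderG c3 by simp
qed

lemma fwd:
  assumes hc: "\<And>x y. br c n x y = brc t n x y" and b: "is_bider c n d D"
  shows "\<forall>x\<in>Lsp n. \<forall>y\<in>Lsp n. d (brc t n x y) = brc t n (d x) y + brc t n x (d y)"
    and "\<forall>x\<in>Lsp n. \<forall>y\<in>Lsp n. D (brc t n x y) = brc t n (D x) y - brc t n (D y) x"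
    and "\<forall>x\<in>Lsp n. \<forall>y\<in>Lsp n. brc t n x (d y) = brc t n x (D y)"
  using b unfolding is_bider_def is_der_def is_antider_def hc by auto

theorem mainTheorem13:
  fixes n :: nat
  assumes "n \<ge> 4"
  shows "(\<forall>d D. lin n d \<longrightarrow> lin n D \<longrightarrow>
     (is_bider (c1 n) n d D \<longleftrightarrow>
       (\<exists>(a1::complex) a2 a3 a4 (b::nat \<Rightarrow> complex).
          d h1 = scl (- a2) (ee n 2) \<and>
          d h2 = scl (- a1) (ee n 1) \<and>
          d (ee n 1) = scl a4 (ee n 1) + scl a1 (ee n 3) \<and>
          d (ee n 2) = scl a3 (ee n 2) \<and>
          (\<forall>i. 3 \<le> i \<and> i \<le> n \<longrightarrow>
             d (ee n i) = scl (of_nat (i - 1) * a4) (ee n i) + scl a1 (ee n (i + 1))) \<and>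
          D h1 = scl (- a2) (ee n 2) \<and>
          D h2 = scl (- a1) (ee n 1) + (\<Sum>i = 3..n - 1. scl (of_nat (i - 1) * b (i + 1)) (ee n i))
                 + scl (b (n + 1)) (ee n n) \<and>
          D (ee n 1) = scl a4 (ee n 1) + scl (- a1) (ee n 3) + (\<Sum>i = 4..n. scl (b i) (ee n i)) \<and>
          D (ee n 2) = scl a3 (ee n 2) \<and>
          (\<forall>i. 3 \<le> i \<and> i \<le> n \<longrightarrow> D (ee n i) = 0))))
   \<and> (\<forall>d D. lin n d \<longrightarrow> lin n D \<longrightarrow>
     (is_bider (c2 n) n d D \<longleftrightarrow>
       (\<exists>(a1::complex) a2 a3 (b::nat \<Rightarrow> complex).
          d h1 = 0 \<and>
          d h2 = scl (- a1) (ee n 1) \<and>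
          d (ee n 1) = scl a3 (ee n 1) + scl a1 (ee n 3) \<and>
          d (ee n 2) = scl a2 (ee n 2) \<and>
          (\<forall>i. 3 \<le> i \<and> i \<le> n \<longrightarrow>
             d (ee n i) = scl (of_nat (i - 1) * a3) (ee n i) + scl a1 (ee n (i + 1))) \<and>
          D h1 = scl (b (n + 2)) (ee n 2) \<and>
          D h2 = scl (- a1) (ee n 1) + (\<Sum>i = 3..n - 1. scl (of_nat (i - 1) * b (i + 1)) (ee n i))
                 + scl (b (n + 1)) (ee n n) \<and>
          D (ee n 1) = scl a3 (ee n 1) + scl (- a1) (ee n 3) + (\<Sum>i = 4..n. scl (b i) (ee n i)) \<and>
          (\<forall>i. 2 \<le> i \<and> i \<le> n \<longrightarrow> D (ee n i) = 0))))"
proof (intro conjI allI impI)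
  have n4: "n \<ge> 4" by (rule assms)
  fix d D assume ld: "lin n d" and lD: "lin n D"
  show "is_bider (c1 n) n d D \<longleftrightarrow>
       (\<exists>(a1::complex) a2 a3 a4 (b::nat \<Rightarrow> complex).
          d h1 = scl (- a2) (ee n 2) \<and>
          d h2 = scl (- a1) (ee n 1) \<and>
          d (ee n 1) = scl a4 (ee n 1) + scl a1 (ee n 3) \<and>
          d (ee n 2) = scl a3 (ee n 2) \<and>
          (\<forall>i. 3 \<le> i \<and> i \<le> n \<longrightarrow>
             d (ee n i) = scl (of_nat (i - 1) * a4) (ee n i) + scl a1 (ee n (i + 1))) \<and>
          D h1 = scl (- a2) (ee n 2) \<and>
          D h2 = scl (- a1) (ee n 1) + (\<Sum>i = 3..n - 1. scl (of_nat (i - 1) * b (i + 1)) (ee n i))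
                 + scl (b (n + 1)) (ee n n) \<and>
          D (ee n 1) = scl a4 (ee n 1) + scl (- a1) (ee n 3) + (\<Sum>i = 4..n. scl (b i) (ee n i)) \<and>
          D (ee n 2) = scl a3 (ee n 2) \<and>
          (\<forall>i. 3 \<le> i \<and> i \<le> n \<longrightarrow> D (ee n i) = 0))" (is "_ \<longleftrightarrow> ?R")
  proof
    assume bi: "is_bider (c1 n) n d D"
    note hc = br1[OF n4]
    note der = fwd(1)[OF hc bi] and ader = fwd(2)[OF hc bi] and c3 = fwd(3)[OF hc bi]
    note fd = fwd_d[where d=d and t=True and n=n, OF n4 ld der]
    note fD = fwd_D[where d=d and D=D and t=True and n=n, OF n4 ld lD der ader c3]
    define b where "b = (\<lambda>i. if i = n + 1 then D h2 (E n) else D (ee n 1) (E i))"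
    have s1: "(\<Sum>i = 3..n - 1. scl (of_nat (i - 1) * D (ee n 1) (E (i + 1))) (ee n i))
       = (\<Sum>i = 3..n - 1. scl (of_nat (i - 1) * b (i + 1)) (ee n i))"
      by (rule sum.cong) (auto simp: b_def)
    have s2: "(\<Sum>i = 4..n. scl (D (ee n 1) (E i)) (ee n i)) = (\<Sum>i = 4..n. scl (b i) (ee n i))"
      by (rule sum.cong) (auto simp: b_def)
    have bn: "b (n + 1) = D h2 (E n)" by (simp add: b_def)
    define p1 where "p1 = d h2 (E 1)"
    define p2 where "p2 = d h1 (E 2)"
    define p3 where "p3 = d (ee n 2) (E 2)"
    define p4 where "p4 = d (ee n 1) (E 1)"
    have F1: "d h1 = scl p2 (ee n 2)" unfolding p2_def by (rule fd(1))
    have F2: "d h2 = scl p1 (ee n 1)" unfolding p1_def by (rule fd(3))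
    have F3: "d (ee n 1) = scl p4 (ee n 1) + scl (- p1) (ee n 3)" unfolding p1_def p4_def by (rule fd(4))
    have F4: "d (ee n 2) = scl p3 (ee n 2)" unfolding p3_def by (rule fd(5))
    have F5: "\<forall>i. 3 \<le> i \<and> i \<le> n \<longrightarrow> d (ee n i) = scl (of_nat (i-1) * p4) (ee n i) + scl (- p1) (ee n (i+1))"
      unfolding p1_def p4_def by (rule fd(6))
    have G1: "D h1 = scl p2 (ee n 2)" unfolding p2_def fD(2)[OF TrueI, symmetric] by (rule fD(1))
    have G2: "D h2 = scl p1 (ee n 1) + (\<Sum>i = 3..n - 1. scl (of_nat (i - 1) * b (i + 1)) (ee n i)) + scl (b (n + 1)) (ee n n)"
      unfolding p1_def bn by (rule fD(3)[unfolded s1])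
    have G3: "D (ee n 1) = scl p4 (ee n 1) + scl p1 (ee n 3) + (\<Sum>i = 4..n. scl (b i) (ee n i))"
      unfolding p1_def p4_def by (rule fD(4)[unfolded s2])
    have G4: "D (ee n 2) = scl p3 (ee n 2)" using fD(5) unfolding p3_def by simp
    show ?R
      apply (rule exI[of _ "- p1"], rule exI[of _ "- p2"], rule exI[of _ p3],
             rule exI[of _ p4], rule exI[of _ b])
      using F1 F2 F3 F4 F5 G1 G2 G3 G4 fD(6) by simp
  next
    assume ?R
    then obtain a1 a2 a3 a4 b where h: "d h1 = scl (- a2) (ee n 2)"
          "d h2 = scl (- a1) (ee n 1)"
          "d (ee n 1) = scl a4 (ee n 1) + scl a1 (ee n 3)"
          "d (ee n 2) = scl a3 (ee n 2)"
          "\<forall>i. 3 \<le> i \<and> i \<le> n \<longrightarrow>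
             d (ee n i) = scl (of_nat (i - 1) * a4) (ee n i) + scl a1 (ee n (i + 1))"
          "D h1 = scl (- a2) (ee n 2)"
          "D h2 = scl (- a1) (ee n 1) + (\<Sum>i = 3..n - 1. scl (of_nat (i - 1) * b (i + 1)) (ee n i))
                 + scl (b (n + 1)) (ee n n)"
          "D (ee n 1) = scl a4 (ee n 1) + scl (- a1) (ee n 3) + (\<Sum>i = 4..n. scl (b i) (ee n i))"
          "D (ee n 2) = scl a3 (ee n 2)"
          "\<forall>i. 3 \<le> i \<and> i \<le> n \<longrightarrow> D (ee n i) = 0" by blast
    show "is_bider (c1 n) n d D"
    proof (rule bwd[OF n4 br1[OF n4] ld lD lin_dF[OF n4] lin_DF[OF n4]])
      fix a assume a: "a \<in> Bas n"
      show "d (ind a) = dF n a1 a2 a3 a4 (ind a)"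
      proof (rule basis_cases[OF a])
        fix j assume j: "1 \<le> j" "j \<le> n"
        then consider "j = 1" | "j = 2" | "3 \<le> j" by linarith
        then show "d (ee n j) = dF n a1 a2 a3 a4 (ee n j)"
          by cases (use h dF_basis[OF n4] j in auto)
      qed (use h dF_basis[OF n4] in auto)
      show "D (ind a) = DF n a1 (- a2) a3 a4 b (ind a)"
      proof (rule basis_cases[OF a])
        fix j assume j: "1 \<le> j" "j \<le> n"
        then consider "j = 1" | "j = 2" | "3 \<le> j" by linarith
        then show "D (ee n j) = DF n a1 (- a2) a3 a4 b (ee n j)"
          by cases (use h DF_basis[OF n4] j in auto)
      qed (use h DF_basis[OF n4] in auto)
    qed (use der_dF[OF n4] ader_DF[OF n4] c3_F[OF n4] in auto)
  qed
next
  have n4: "n \<ge> 4" by (rule assms)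
  fix d D assume ld: "lin n d" and lD: "lin n D"
  show "is_bider (c2 n) n d D \<longleftrightarrow>
       (\<exists>(a1::complex) a2 a3 (b::nat \<Rightarrow> complex).
          d h1 = 0 \<and>
          d h2 = scl (- a1) (ee n 1) \<and>
          d (ee n 1) = scl a3 (ee n 1) + scl a1 (ee n 3) \<and>
          d (ee n 2) = scl a2 (ee n 2) \<and>
          (\<forall>i. 3 \<le> i \<and> i \<le> n \<longrightarrow>
             d (ee n i) = scl (of_nat (i - 1) * a3) (ee n i) + scl a1 (ee n (i + 1))) \<and>
          D h1 = scl (b (n + 2)) (ee n 2) \<and>
          D h2 = scl (- a1) (ee n 1) + (\<Sum>i = 3..n - 1. scl (of_nat (i - 1) * b (i + 1)) (ee n i))
                 + scl (b (n + 1)) (ee n n) \<and>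
          D (ee n 1) = scl a3 (ee n 1) + scl (- a1) (ee n 3) + (\<Sum>i = 4..n. scl (b i) (ee n i)) \<and>
          (\<forall>i. 2 \<le> i \<and> i \<le> n \<longrightarrow> D (ee n i) = 0))" (is "_ \<longleftrightarrow> ?R")
  proof
    assume bi: "is_bider (c2 n) n d D"
    note hc = br2[OF n4]
    note der = fwd(1)[OF hc bi] and ader = fwd(2)[OF hc bi] and c3 = fwd(3)[OF hc bi]
    note fd = fwd_d[where d=d and t=False and n=n, OF n4 ld der]
    note fD = fwd_D[where d=d and D=D and t=False and n=n, OF n4 ld lD der ader c3]
    define b where "b = (\<lambda>i. if i = n + 2 then D h1 (E 2) else if i = n + 1 then D h2 (E n) else D (ee n 1) (E i))"
    have s1: "(\<Sum>i = 3..n - 1. scl (of_nat (i - 1) * D (ee n 1) (E (i + 1))) (ee n i))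
       = (\<Sum>i = 3..n - 1. scl (of_nat (i - 1) * b (i + 1)) (ee n i))"
      by (rule sum.cong) (auto simp: b_def)
    have s2: "(\<Sum>i = 4..n. scl (D (ee n 1) (E i)) (ee n i)) = (\<Sum>i = 4..n. scl (b i) (ee n i))"
      by (rule sum.cong) (auto simp: b_def)
    have bn: "b (n + 1) = D h2 (E n)" "b (n + 2) = D h1 (E 2)" by (simp_all add: b_def)
    define p1 where "p1 = d h2 (E 1)"
    define p3 where "p3 = d (ee n 2) (E 2)"
    define p4 where "p4 = d (ee n 1) (E 1)"
    have F1: "d h1 = 0" using fd(1) fd(2) by (simp add: scl0)
    have F2: "d h2 = scl p1 (ee n 1)" unfolding p1_def by (rule fd(3))
    have F3: "d (ee n 1) = scl p4 (ee n 1) + scl (- p1) (ee n 3)" unfolding p1_def p4_def by (rule fd(4))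
    have F4: "d (ee n 2) = scl p3 (ee n 2)" unfolding p3_def by (rule fd(5))
    have F5: "\<forall>i. 3 \<le> i \<and> i \<le> n \<longrightarrow> d (ee n i) = scl (of_nat (i-1) * p4) (ee n i) + scl (- p1) (ee n (i+1))"
      unfolding p1_def p4_def by (rule fd(6))
    have G1: "D h1 = scl (b (n + 2)) (ee n 2)" unfolding bn by (rule fD(1))
    have G2: "D h2 = scl p1 (ee n 1) + (\<Sum>i = 3..n - 1. scl (of_nat (i - 1) * b (i + 1)) (ee n i)) + scl (b (n + 1)) (ee n n)"
      unfolding p1_def bn by (rule fD(3)[unfolded s1])
    have G3: "D (ee n 1) = scl p4 (ee n 1) + scl p1 (ee n 3) + (\<Sum>i = 4..n. scl (b i) (ee n i))"
      unfolding p1_def p4_def by (rule fD(4)[unfolded s2])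
    have De: "\<forall>i. 2 \<le> i \<and> i \<le> n \<longrightarrow> D (ee n i) = 0"
    proof (intro allI impI)
      fix i assume i: "2 \<le> i \<and> i \<le> n"
      show "D (ee n i) = 0"
      proof (cases "i = 2")
        case True then show ?thesis using fD(5) by (simp add: scl0)
      next
        case False then show ?thesis using fD(6) i by simp
      qed
    qed
    show ?R
      apply (rule exI[of _ "- p1"], rule exI[of _ p3],
             rule exI[of _ p4], rule exI[of _ b])
      using F1 F2 F3 F4 F5 G1 G2 G3 De by simp
  next
    assume ?R
    then obtain a1 a2 a3 b where h: "d h1 = 0"
          "d h2 = scl (- a1) (ee n 1)"
          "d (ee n 1) = scl a3 (ee n 1) + scl a1 (ee n 3)"
          "d (ee n 2) = scl a2 (ee n 2)"
          "\<forall>i. 3 \<le> i \<and> i \<le> n \<longrightarrow>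
             d (ee n i) = scl (of_nat (i - 1) * a3) (ee n i) + scl a1 (ee n (i + 1))"
          "D h1 = scl (b (n + 2)) (ee n 2)"
          "D h2 = scl (- a1) (ee n 1) + (\<Sum>i = 3..n - 1. scl (of_nat (i - 1) * b (i + 1)) (ee n i))
                 + scl (b (n + 1)) (ee n n)"
          "D (ee n 1) = scl a3 (ee n 1) + scl (- a1) (ee n 3) + (\<Sum>i = 4..n. scl (b i) (ee n i))"
          "\<forall>i. 2 \<le> i \<and> i \<le> n \<longrightarrow> D (ee n i) = 0" by blast
    show "is_bider (c2 n) n d D"
    proof (rule bwd[OF n4 br2[OF n4] ld lD lin_dF[OF n4] lin_DF[OF n4]])
      fix a assume a: "a \<in> Bas n"
      show "d (ind a) = dF n a1 0 a2 a3 (ind a)"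
      proof (rule basis_cases[OF a])
        fix j assume j: "1 \<le> j" "j \<le> n"
        then consider "j = 1" | "j = 2" | "3 \<le> j" by linarith
        then show "d (ee n j) = dF n a1 0 a2 a3 (ee n j)"
          by cases (use h dF_basis[OF n4] j in auto)
      qed (use h dF_basis[OF n4] scl0 in auto)
      show "D (ind a) = DF n a1 (b (n + 2)) 0 a3 b (ind a)"
      proof (rule basis_cases[OF a])
        fix j assume j: "1 \<le> j" "j \<le> n"
        then consider "j = 1" | "j = 2" | "3 \<le> j" by linarith
        then show "D (ee n j) = DF n a1 (b (n + 2)) 0 a3 b (ee n j)"
          by cases (use h DF_basis[OF n4] j scl0 in auto)
      qed (use h DF_basis[OF n4] in auto)
    qed (use der_dF[OF n4] ader_DF[OF n4] c3_F[OF n4] in auto)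
  qed
qed

end
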